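(* Let $x_1,\ldots,x_k$ be i.i.d. real standard Gaussian random variables, $\mathbf{x}=[x_1,\ldots,x_k]^T$, and let $a_1,\ldots,a_k$ be real numbers. For $l=1,\ldots,k$ let $\mathbf{a}_l=[a_1,\ldots,a_l,0,\ldots,0]^T\in\mathbb{R}^k$. For $1\le l<k$ define $y_l=a_{l+1}\,\mathbf{a}_l^T\mathbf{x}-\|\mathbf{a}_l\|^2x_{l+1}$. Then for every $h=l+1,\ldots,k$, the random variables $y_l$ and $\mathbf{a}_h^T\mathbf{x}$ are independent. *)

theory Defs
  imports "HOL-Probability.Probability"
begin

end

theory Submission
  imports Defs
begin

lemma phi_rot:
  fixes c d p q :: real assumes "c^2 + d^2 = 1"
  shows "normal_density 0 1 (c*q - d*p) * normal_density 0 1 (d*q + c*p) = normal_density 0 1 q * normal_density 0 1 p"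
proof -
  have "(c*q - d*p)^2 + (d*q + c*p)^2 = (c^2+d^2)*(q^2+p^2)" by algebra
  hence e: "(c*q - d*p)^2 + (d*q + c*p)^2 = q^2+p^2" using assms by simp
  have "exp (-((c*q - d*p)^2) / 2) * exp (-((d*q + c*p)^2) / 2) = exp ((-((c*q - d*p)^2) / 2) + (-((d*q + c*p)^2) / 2))"
    by (simp add: mult_exp_exp)
  also have "(-((c*q - d*p)^2) / 2) + (-((d*q + c*p)^2) / 2) = (-(q^2)/2) + (-(p^2)/2)"
    using e by (simp add: field_simps)
  also have "exp ((-(q^2)/2) + (-(p^2)/2)) = exp (-(q^2)/2) * exp (-(p^2)/2)" by (simp add: mult_exp_exp)
  finally show ?thesis unfolding std_normal_density_def by (simp add: algebra_simps)
qed

lemma rot_key: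
  fixes c d :: real assumes cd: "c^2 + d^2 = 1" and d: "d \<noteq> 0"
    and [measurable]: "P \<in> sets borel" "Q \<in> sets borel"
  shows "(\<integral>\<^sup>+u. \<integral>\<^sup>+w. ennreal (normal_density 0 1 u * normal_density 0 1 w) * (indicator P (-d*u + c* w) * indicator Q (c*u + d* w)) \<partial>lborel \<partial>lborel)
    = (\<integral>\<^sup>+x. ennreal (normal_density 0 1 x) * indicator P x \<partial>lborel) * (\<integral>\<^sup>+x. ennreal (normal_density 0 1 x) * indicator Q x \<partial>lborel)"
proof -
  let ?f = "normal_density 0 1"
  have d1: "1/d \<noteq> 0" "-d \<noteq> 0" using d by auto
  have s1: "(\<integral>\<^sup>+w. ennreal (?f u * ?f w) * (indicator P (-d*u + c* w) * indicator Q (c*u + d* w)) \<partial>lborel)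
     = (\<integral>\<^sup>+q. ennreal \<bar>1/d\<bar> * (ennreal (?f u * ?f ((q - c*u)/d)) * (indicator P ((c*q-u)/d) * indicator Q q)) \<partial>lborel)" for u
  proof -
    have "(\<integral>\<^sup>+w. ennreal (?f u * ?f w) * (indicator P (-d*u + c* w) * indicator Q (c*u + d* w)) \<partial>lborel)
       = ennreal \<bar>1/d\<bar> * (\<integral>\<^sup>+q. ennreal (?f u * ?f (-c*u/d + (1/d)*q)) * (indicator P (-d*u + c*(-c*u/d + (1/d)*q)) * indicator Q (c*u + d*(-c*u/d + (1/d)*q))) \<partial>lborel)"
      by (rule nn_integral_real_affine[OF _ d1(1)]) measurable
    also have "\<dots> = ennreal \<bar>1/d\<bar> * (\<integral>\<^sup>+q. ennreal (?f u * ?f ((q - c*u)/d)) * (indicator P ((c*q-u)/d) * indicator Q q) \<partial>lborel)"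
    proof -
      have "-d*u + c*(-c*u/d + (1/d)*q) = (c*q-u)/d" for q
      proof -
        have "-d*u + c*(-c*u/d + (1/d)*q) = (-(c^2+d^2)*u + c*q)/d" using d by (simp add: field_simps power2_eq_square)
        thus ?thesis using cd by simp
      qed
      moreover have "c*u + d*(-c*u/d + (1/d)*q) = q" for q using d by (simp add: field_simps)
      moreover have "-c*u/d + (1/d)*q = (q - c*u)/d" for q using d by (simp add: field_simps)
      ultimately show ?thesis by simp
    qed
    finally show ?thesis by (simp add: nn_integral_cmult)
  qed
  have s3: "(\<integral>\<^sup>+u. ennreal \<bar>1/d\<bar> * (ennreal (?f u * ?f ((q - c*u)/d)) * (indicator P ((c*q-u)/d) * indicator Q q)) \<partial>lborel)
     = (\<integral>\<^sup>+p. ennreal (?f q * ?f p) * (indicator P p * indicator Q q) \<partial>lborel)" for q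
  proof -
    have "(\<integral>\<^sup>+u. ennreal \<bar>1/d\<bar> * (ennreal (?f u * ?f ((q - c*u)/d)) * (indicator P ((c*q-u)/d) * indicator Q q)) \<partial>lborel)
      = ennreal \<bar>-d\<bar> * (\<integral>\<^sup>+p. ennreal \<bar>1/d\<bar> * (ennreal (?f (c*q + (-d)*p) * ?f ((q - c*(c*q + (-d)*p))/d)) * (indicator P ((c*q-(c*q + (-d)*p))/d) * indicator Q q)) \<partial>lborel)"
      by (rule nn_integral_real_affine[OF _ d1(2)]) measurable
    also have "\<dots> = (\<integral>\<^sup>+p. ennreal \<bar>-d\<bar> * (ennreal \<bar>1/d\<bar> * (ennreal (?f (c*q + (-d)*p) * ?f ((q - c*(c*q + (-d)*p))/d)) * (indicator P ((c*q-(c*q + (-d)*p))/d) * indicator Q q))) \<partial>lborel)"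
      by (simp add: nn_integral_cmult)
    also have "\<dots> = (\<integral>\<^sup>+p. ennreal (?f q * ?f p) * (indicator P p * indicator Q q) \<partial>lborel)"
    proof (rule nn_integral_cong)
      fix p
      have a1: "(c*q-(c*q + (-d)*p))/d = p" using d by simp
      have a2: "(q - c*(c*q + (-d)*p))/d = d*q + c*p"
      proof -
        have "(q - c*(c*q + (-d)*p)) = ((1 - c^2)*q + c*d*p)" by (simp add: algebra_simps power2_eq_square)
        also have "\<dots> = d^2*q + c*d*p" proof - have "1 - c^2 = d^2" using cd by simp thus ?thesis by simp qed
        also have "\<dots> = d*(d*q + c*p)" by (simp add: algebra_simps power2_eq_square)
        finally show ?thesis using d by simp
      qed
      have a3: "ennreal \<bar>-d\<bar> * ennreal \<bar>1/d\<bar> = 1" using d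
        by (simp add: ennreal_mult'[symmetric] abs_mult[symmetric])
      show "ennreal \<bar>-d\<bar> * (ennreal \<bar>1/d\<bar> * (ennreal (?f (c*q + (-d)*p) * ?f ((q - c*(c*q + (-d)*p))/d)) * (indicator P ((c*q-(c*q + (-d)*p))/d) * indicator Q q)))
        = ennreal (?f q * ?f p) * (indicator P p * indicator Q q)"
        unfolding a1 a2 using phi_rot[OF cd, of q p] a3
        by (simp add: mult.assoc[symmetric])
    qed
    finally show ?thesis .
  qed
  have "(\<integral>\<^sup>+u. \<integral>\<^sup>+w. ennreal (?f u * ?f w) * (indicator P (-d*u + c* w) * indicator Q (c*u + d* w)) \<partial>lborel \<partial>lborel)
     = (\<integral>\<^sup>+u. \<integral>\<^sup>+q. ennreal \<bar>1/d\<bar> * (ennreal (?f u * ?f ((q - c*u)/d)) * (indicator P ((c*q-u)/d) * indicator Q q)) \<partial>lborel \<partial>lborel)"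
    by (simp only: s1)
  also have "\<dots> = (\<integral>\<^sup>+q. \<integral>\<^sup>+u. ennreal \<bar>1/d\<bar> * (ennreal (?f u * ?f ((q - c*u)/d)) * (indicator P ((c*q-u)/d) * indicator Q q)) \<partial>lborel \<partial>lborel)"
    by (rule lborel_pair.Fubini'[symmetric]) measurable
  also have "\<dots> = (\<integral>\<^sup>+q. \<integral>\<^sup>+p. ennreal (?f q * ?f p) * (indicator P p * indicator Q q) \<partial>lborel \<partial>lborel)"
    by (simp only: s3)
  also have "\<dots> = (\<integral>\<^sup>+q. (ennreal (?f q) * indicator Q q) * (\<integral>\<^sup>+p. ennreal (?f p) * indicator P p \<partial>lborel) \<partial>lborel)"
    by (rule nn_integral_cong, subst nn_integral_cmult[symmetric])
       (auto intro!: nn_integral_cong simp: ennreal_mult' mult_ac)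
  also have "\<dots> = (\<integral>\<^sup>+x. ennreal (?f x) * indicator P x \<partial>lborel) * (\<integral>\<^sup>+x. ennreal (?f x) * indicator Q x \<partial>lborel)"
    by (subst nn_integral_multc) (auto simp: mult.commute)
  finally show ?thesis .
qed

lemma N_univ: "(\<integral>\<^sup>+x. ennreal (normal_density 0 1 x) * indicator UNIV x \<partial>lborel) = 1"
  by (simp add: nn_integral_eq_integral normal_density_nonneg)

lemma (in prob_space) rot_emeasure:
  assumes ind: "indep_var borel U borel V"
    and dU: "distributed M lborel U (normal_density 0 1)" and dV: "distributed M lborel V (normal_density 0 1)"
    and cd: "c^2+d^2=1" and d: "d \<noteq> 0"
    and [measurable]: "P \<in> sets borel" "Q \<in> sets borel"
  shows "emeasure M ((\<lambda>\<omega>. (-d*U \<omega> + c*V \<omega>, c*U \<omega> + d*V \<omega>)) -` (P \<times> Q) \<inter> space M)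
    = (\<integral>\<^sup>+x. ennreal (normal_density 0 1 x) * indicator P x \<partial>lborel) * (\<integral>\<^sup>+x. ennreal (normal_density 0 1 x) * indicator Q x \<partial>lborel)"
proof -
  have ind': "indep_var lborel U lborel V"
    using ind unfolding indep_var_def indep_vars_def by (simp add: case_bool_if)
  have J: "distributed M (lborel \<Otimes>\<^sub>M lborel) (\<lambda>x. (U x, V x)) (\<lambda>(x,y). ennreal (normal_density 0 1 x) * ennreal (normal_density 0 1 y))"
    by (rule distributed_joint_indep[OF _ _ dU dV ind']) (auto intro: lborel.sigma_finite_measure_axioms)
  define L where "L = {z\<in>space (lborel \<Otimes>\<^sub>M lborel). -d*fst z + c * snd z \<in> P \<and> c*fst z + d * snd z \<in> Q}"
  have Lm[measurable]: "L \<in> sets (lborel \<Otimes>\<^sub>M lborel)" unfolding L_def by measurable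
  have "(\<lambda>\<omega>. (-d*U \<omega> + c*V \<omega>, c*U \<omega> + d*V \<omega>)) -` (P \<times> Q) \<inter> space M = (\<lambda>x. (U x, V x)) -` L \<inter> space M"
    unfolding L_def by (auto simp: space_pair_measure)
  also have "emeasure M \<dots> = (\<integral>\<^sup>+z. (\<lambda>(x,y). ennreal (normal_density 0 1 x) * ennreal (normal_density 0 1 y)) z * indicator L z \<partial>(lborel \<Otimes>\<^sub>M lborel))"
    by (rule distributed_emeasure[OF J]) (rule Lm)
  also have "\<dots> = (\<integral>\<^sup>+u. \<integral>\<^sup>+w. ennreal (normal_density 0 1 u * normal_density 0 1 w) * (indicator P (-d*u + c* w) * indicator Q (c*u + d* w)) \<partial>lborel \<partial>lborel)"
    by (subst lborel.nn_integral_fst[symmetric])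
       (auto simp: L_def ennreal_mult' indicator_def space_pair_measure intro!: nn_integral_cong)
  also have "\<dots> = (\<integral>\<^sup>+x. ennreal (normal_density 0 1 x) * indicator P x \<partial>lborel) * (\<integral>\<^sup>+x. ennreal (normal_density 0 1 x) * indicator Q x \<partial>lborel)"
    by (rule rot_key[OF cd d]) simp_all
  finally show ?thesis .
qed

lemma (in prob_space) rot_indep:
  assumes ind: "indep_var borel U borel V"
    and dU: "distributed M lborel U (normal_density 0 1)" and dV: "distributed M lborel V (normal_density 0 1)"
    and cd: "c^2+d^2=1" and d: "d \<noteq> 0"
  shows "indep_var borel (\<lambda>\<omega>. -d*U \<omega> + c*V \<omega>) borel (\<lambda>\<omega>. c*U \<omega> + d*V \<omega>)"
proof -
  have [measurable]: "U \<in> borel_measurable M" "V \<in> borel_measurable M"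
    using distributed_measurable[OF dU] distributed_measurable[OF dV] by auto
  let ?B = "\<lambda>\<omega>. -d*U \<omega> + c*V \<omega>" and ?A = "\<lambda>\<omega>. c*U \<omega> + d*V \<omega>"
  let ?N = "\<lambda>P. (\<integral>\<^sup>+x. ennreal (normal_density 0 1 x) * indicator P x \<partial>lborel)"
  have rvB: "random_variable borel ?B" and rvA: "random_variable borel ?A" by measurable
  have eB: "emeasure M (?B -` P \<inter> space M) = ?N P" if [measurable]: "P \<in> sets borel" for P
  proof -
    have "?B -` P \<inter> space M = (\<lambda>\<omega>. (?B \<omega>, ?A \<omega>)) -` (P \<times> UNIV) \<inter> space M" by auto
    thus ?thesis using rot_emeasure[OF ind dU dV cd d, of P UNIV] N_univ by simp
  qed
  have eA: "emeasure M (?A -` Q \<inter> space M) = ?N Q" if [measurable]: "Q \<in> sets borel" for Q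
  proof -
    have "?A -` Q \<inter> space M = (\<lambda>\<omega>. (?B \<omega>, ?A \<omega>)) -` (UNIV \<times> Q) \<inter> space M" by auto
    thus ?thesis using rot_emeasure[OF ind dU dV cd d, of UNIV Q] N_univ by simp
  qed
  interpret X: prob_space "distr M borel ?B" by (rule prob_space_distr) (rule rvB)
  interpret Y: prob_space "distr M borel ?A" by (rule prob_space_distr) (rule rvA)
  have "distr M borel ?B \<Otimes>\<^sub>M distr M borel ?A = distr M (borel \<Otimes>\<^sub>M borel) (\<lambda>x. (?B x, ?A x))"
  proof (rule pair_measure_eqI)
    show "sigma_finite_measure (distr M borel ?B)" ..
    show "sigma_finite_measure (distr M borel ?A)" ..
    fix P Q assume P: "P \<in> sets (distr M borel ?B)" and Q: "Q \<in> sets (distr M borel ?A)"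
    hence [measurable]: "P \<in> sets borel" "Q \<in> sets borel" by auto
    show "emeasure (distr M borel ?B) P * emeasure (distr M borel ?A) Q = emeasure (distr M (borel \<Otimes>\<^sub>M borel) (\<lambda>x. (?B x, ?A x))) (P \<times> Q)"
      unfolding emeasure_distr[OF rvB \<open>P \<in> sets borel\<close>] emeasure_distr[OF rvA \<open>Q \<in> sets borel\<close>]
        emeasure_distr[OF measurable_Pair[OF rvB rvA] pair_measureI[OF \<open>P \<in> sets borel\<close> \<open>Q \<in> sets borel\<close>]]
        eB[OF \<open>P \<in> sets borel\<close>] eA[OF \<open>Q \<in> sets borel\<close>]
      by (rule rot_emeasure[OF ind dU dV cd d, symmetric]) simp_all
  qed simp
  thus ?thesis using rvA rvB by (simp add: indep_var_distribution_eq)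
qed

lemma (in prob_space) indep_blocks:
  fixes X :: "'i \<Rightarrow> 'a \<Rightarrow> real" and c e :: "'i \<Rightarrow> real"
  assumes ind: "indep_vars (\<lambda>_. borel) X I" and AB: "A \<inter> B = {}" "A \<subseteq> I" "B \<subseteq> I"
  shows "indep_var borel (\<lambda>\<omega>. \<Sum>i\<in>A. c i * X i \<omega>) borel (\<lambda>\<omega>. \<Sum>i\<in>B. e i * X i \<omega>)"
proof -
  have m1: "(\<lambda>f. \<Sum>i\<in>A. c i * f i) \<in> borel_measurable (PiM A (\<lambda>_. borel))"
    by (rule borel_measurable_sum) measurable
  have m2: "(\<lambda>f. \<Sum>i\<in>B. e i * f i) \<in> borel_measurable (PiM B (\<lambda>_. borel))"
    by (rule borel_measurable_sum) measurable
  have "indep_var borel ((\<lambda>f. \<Sum>i\<in>A. c i * f i) \<circ> (\<lambda>\<omega>. restrict (\<lambda>i. X i \<omega>) A))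
      borel ((\<lambda>f. \<Sum>i\<in>B. e i * f i) \<circ> (\<lambda>\<omega>. restrict (\<lambda>i. X i \<omega>) B))"
    by (rule indep_var_compose[OF indep_var_restrict[OF ind AB] m1 m2])
  moreover have "((\<lambda>f. \<Sum>i\<in>A. c i * f i) \<circ> (\<lambda>\<omega>. restrict (\<lambda>i. X i \<omega>) A)) = (\<lambda>\<omega>. \<Sum>i\<in>A. c i * X i \<omega>)"
    by (auto intro!: sum.cong)
  moreover have "((\<lambda>f. \<Sum>i\<in>B. e i * f i) \<circ> (\<lambda>\<omega>. restrict (\<lambda>i. X i \<omega>) B)) = (\<lambda>\<omega>. \<Sum>i\<in>B. e i * X i \<omega>)"
    by (auto intro!: sum.cong)
  ultimately show ?thesis by simp
qed

lemma (in prob_space) three: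
  fixes gA gB :: "real \<times> real \<Rightarrow> real" and U V T :: "'a \<Rightarrow> real" and \<kappa> \<rho> :: real
  assumes ZT: "indep_var (borel \<Otimes>\<^sub>M borel) (\<lambda>\<omega>. (U \<omega>, V \<omega>)) (borel \<Otimes>\<^sub>M borel) (\<lambda>\<omega>. (T \<omega>, 0))"
    and BA: "indep_var borel (\<lambda>\<omega>. gB (U \<omega>, V \<omega>)) borel (\<lambda>\<omega>. gA (U \<omega>, V \<omega>))"
    and [measurable]: "gB \<in> borel_measurable (borel \<Otimes>\<^sub>M borel)" "gA \<in> borel_measurable (borel \<Otimes>\<^sub>M borel)"
  shows "indep_var borel (\<lambda>\<omega>. \<kappa> * gB (U \<omega>, V \<omega>)) borel (\<lambda>\<omega>. \<rho> * gA (U \<omega>, V \<omega>) + T \<omega>)"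
proof -
  have [measurable]: "(\<lambda>\<omega>. (U \<omega>, V \<omega>)) \<in> measurable M (borel \<Otimes>\<^sub>M borel)" "T \<in> borel_measurable M"
    using indep_var_rv1[OF ZT] measurable_compose[OF indep_var_rv2[OF ZT] measurable_fst] by (auto simp: o_def)
  define F :: "nat \<Rightarrow> 'a \<Rightarrow> real" where
    "F = (\<lambda>i \<omega>. if i = 0 then gB (U \<omega>, V \<omega>) else if i = 1 then gA (U \<omega>, V \<omega>) else T \<omega>)"
  have rv: "random_variable borel (F i)" for i unfolding F_def by measurable
  have indF: "indep_vars (\<lambda>_. borel) F {0,1,2}"
  proof (subst indep_vars_finite[where E="\<lambda>_. sets borel"])
    show "\<forall>A\<in>(\<Pi> i\<in>{0,1,2}. sets borel). prob (\<Inter>j\<in>{0,1,2}. F j -` A j \<inter> space M) = (\<Prod>j\<in>{0,1,2}. prob (F j -` A j \<inter> space M))"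
    proof
      fix A assume A: "A \<in> (\<Pi> i\<in>{0::nat,1,2}. sets (borel::real measure))"
      hence A0[measurable]: "A 0 \<in> sets borel" and A1[measurable]: "A 1 \<in> sets borel" and A2[measurable]: "A 2 \<in> sets borel" by auto
      define G where "G = {z \<in> space (borel \<Otimes>\<^sub>M borel). gB z \<in> A 0 \<and> gA z \<in> A 1}"
      have Gm: "G \<in> sets (borel \<Otimes>\<^sub>M borel)" unfolding G_def by measurable
      have "(\<Inter>j\<in>{0,1,2}. F j -` A j \<inter> space M) = (\<lambda>\<omega>. ((U \<omega>, V \<omega>), T \<omega>)) -` (G \<times> A 2) \<inter> space M"
        by (auto simp: F_def G_def space_pair_measure)
      hence "prob (\<Inter>j\<in>{0,1,2}. F j -` A j \<inter> space M) = prob ((\<lambda>\<omega>. (U \<omega>, V \<omega>)) -` G \<inter> space M) * prob (T -` A 2 \<inter> space M)"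
        using indep_varD[OF ZT Gm pair_measureI[OF A2 sets.top[of borel]]] by (simp add: space_pair_measure vimage_def Int_def)
      also have "(\<lambda>\<omega>. (U \<omega>, V \<omega>)) -` G \<inter> space M = (\<lambda>\<omega>. (gB (U \<omega>, V \<omega>), gA (U \<omega>, V \<omega>))) -` (A 0 \<times> A 1) \<inter> space M"
        by (auto simp: G_def space_pair_measure)
      also have "prob \<dots> = prob (F 0 -` A 0 \<inter> space M) * prob (F 1 -` A 1 \<inter> space M)"
        using indep_varD[OF BA A0 A1] by (simp add: F_def)
      finally show "prob (\<Inter>j\<in>{0,1,2}. F j -` A j \<inter> space M) = (\<Prod>j\<in>{0,1,2}. prob (F j -` A j \<inter> space M))"
        by (simp add: F_def mult.assoc)
    qed
  next
    have "sigma_sets UNIV (sets borel) = sets (borel::real measure)" using sets.sigma_sets_eq[of borel] by simp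
    thus "\<And>i. i \<in> {0, 1, 2} \<Longrightarrow> sets (borel::real measure) = sigma_sets (space borel) (sets borel)" by simp
  qed (auto simp: rv sets.Int_stable sets.sets_into_space)
  have m1: "(\<lambda>f. \<kappa> * f 0) \<in> borel_measurable (PiM {0::nat} (\<lambda>_. borel))" by measurable
  have m2: "(\<lambda>f. \<rho> * f 1 + f 2) \<in> borel_measurable (PiM {1::nat,2} (\<lambda>_. borel))" by measurable
  have "indep_var borel ((\<lambda>f. \<kappa> * f 0) \<circ> (\<lambda>\<omega>. restrict (\<lambda>i. F i \<omega>) {0}))
      borel ((\<lambda>f. \<rho> * f 1 + f 2) \<circ> (\<lambda>\<omega>. restrict (\<lambda>i. F i \<omega>) {1,2}))"
    by (rule indep_var_compose[OF indep_var_restrict[OF indF] m1 m2]) auto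
  thus ?thesis by (simp add: F_def o_def)
qed

theorem lemma1:
  fixes M :: "'s measure" and X :: "nat \<Rightarrow> 's \<Rightarrow> real"
    and a :: "nat \<Rightarrow> real" and k l h :: nat
  assumes "prob_space M"
    and "prob_space.indep_vars M (\<lambda>_. borel) X {1..k}"
    and "\<And>i. i \<in> {1..k} \<Longrightarrow> distributed M lborel (X i) std_normal_density"
    and "1 \<le> l" and "l < k" and "l + 1 \<le> h" and "h \<le> k"
  shows "prob_space.indep_var M
           borel (\<lambda>\<omega>. a (l + 1) * (\<Sum>i=1..l. a i * X i \<omega>)
                       - (\<Sum>i=1..l. (a i)\<^sup>2) * X (l + 1) \<omega>)
           borel (\<lambda>\<omega>. \<Sum>i=1..h. a i * X i \<omega>)"
proof -
  interpret prob_space M by (rule assms(1))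
  note ind = assms(2)
  note nrm = assms(3)
  define b where "b = a (l+1)"
  define s where "s = (\<Sum>i=1..l. (a i)\<^sup>2)"
  have s0: "s \<ge> 0" unfolding s_def by (simp add: sum_nonneg)
  have split: "(\<Sum>i=1..h. f i) = (\<Sum>i=1..l. f i) + f (l+1) + (\<Sum>i=l+2..h. f i)" for f :: "nat \<Rightarrow> real"
  proof -
    have "{1..h} = {1..l} \<union> insert (l+1) {l+2..h}" using assms(4-7) by auto
    moreover have "{1..l} \<inter> insert (l+1) {l+2..h} = {}" by auto
    ultimately show ?thesis by (simp add: sum.union_disjoint add.assoc)
  qed
  have yeq: "(\<lambda>\<omega>. a (l + 1) * (\<Sum>i=1..l. a i * X i \<omega>) - (\<Sum>i=1..l. (a i)\<^sup>2) * X (l + 1) \<omega>)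
     = (\<lambda>\<omega>. b * (\<Sum>i=1..l. a i * X i \<omega>) - s * X (l + 1) \<omega>)" by (simp add: b_def s_def)
  consider "s = 0" | "s > 0" "b = 0" | "s > 0" "b \<noteq> 0" using s0 by linarith
  then have "indep_var borel (\<lambda>\<omega>. b * (\<Sum>i=1..l. a i * X i \<omega>) - s * X (l + 1) \<omega>) borel (\<lambda>\<omega>. \<Sum>i=1..h. a i * X i \<omega>)"
  proof cases
    case 1
    hence a0: "\<And>i. i \<in> {1..l} \<Longrightarrow> a i = 0" unfolding s_def by (simp add: sum_nonneg_eq_0_iff)
    have "indep_var borel (\<lambda>\<omega>. \<Sum>i\<in>{1..l}. 0 * X i \<omega>) borel (\<lambda>\<omega>. \<Sum>i\<in>insert (l+1) {l+2..h}. a i * X i \<omega>)"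
      by (rule indep_blocks[OF ind]) (use assms in auto)
    moreover have "(\<lambda>\<omega>. b * (\<Sum>i=1..l. a i * X i \<omega>) - s * X (l + 1) \<omega>) = (\<lambda>\<omega>. \<Sum>i\<in>{1..l}. 0 * X i \<omega>)"
      using a0 1 by simp
    moreover have "(\<lambda>\<omega>. \<Sum>i=1..h. a i * X i \<omega>) = (\<lambda>\<omega>. \<Sum>i\<in>insert (l+1) {l+2..h}. a i * X i \<omega>)"
    proof
      fix \<omega>
      have "(\<Sum>i=1..l. a i * X i \<omega>) = 0" using a0 by simp
      thus "(\<Sum>i=1..h. a i * X i \<omega>) = (\<Sum>i\<in>insert (l+1) {l+2..h}. a i * X i \<omega>)"
        unfolding split[of "\<lambda>i. a i * X i \<omega>"] by simp
    qed
    ultimately show ?thesis by simp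
  next
    case 2
    have "indep_var borel (\<lambda>\<omega>. \<Sum>i\<in>{l+1}. (-s) * X i \<omega>) borel (\<lambda>\<omega>. \<Sum>i\<in>{1..l} \<union> {l+2..h}. a i * X i \<omega>)"
      by (rule indep_blocks[OF ind]) (use assms in auto)
    moreover have "(\<lambda>\<omega>. b * (\<Sum>i=1..l. a i * X i \<omega>) - s * X (l + 1) \<omega>) = (\<lambda>\<omega>. \<Sum>i\<in>{l+1}. (-s) * X i \<omega>)"
      using 2 by simp
    moreover have "(\<lambda>\<omega>. \<Sum>i=1..h. a i * X i \<omega>) = (\<lambda>\<omega>. \<Sum>i\<in>{1..l} \<union> {l+2..h}. a i * X i \<omega>)"
    proof
      fix \<omega>
      show "(\<Sum>i=1..h. a i * X i \<omega>) = (\<Sum>i\<in>{1..l} \<union> {l+2..h}. a i * X i \<omega>)"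
        unfolding split[of "\<lambda>i. a i * X i \<omega>"] using 2 by (simp add: sum.union_disjoint b_def)
    qed
    ultimately show ?thesis by simp
  next
    case 3
    define r where "r = sqrt s"
    define \<rho> where "\<rho> = sqrt (s + b^2)"
    define c where "c = r / \<rho>"
    define d where "d = b / \<rho>"
    have r0: "r > 0" using 3 by (simp add: r_def)
    have rr: "r * r = s" using 3 by (simp add: r_def)
    have \<rho>0: "\<rho> > 0" using 3 by (simp add: \<rho>_def add_pos_nonneg)
    have \<rho>\<rho>: "\<rho> * \<rho> = s + b^2" using 3 by (simp add: \<rho>_def)
    have \<rho>c: "\<rho> * c = r" and \<rho>d: "\<rho> * d = b" using \<rho>0 by (simp_all add: c_def d_def)
    have cd: "c^2 + d^2 = 1"
    proof -
      have "\<rho>^2 * (c^2 + d^2) = r^2 + b^2" using \<rho>c \<rho>d by (simp add: algebra_simps power_mult_distrib[symmetric])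
      also have "\<dots> = \<rho>^2" using rr \<rho>\<rho> by (simp add: power2_eq_square)
      finally show ?thesis using \<rho>0 by simp
    qed
    have d0: "d \<noteq> 0" using 3 \<rho>0 by (simp add: d_def)
    define U where "U = (\<lambda>\<omega>. \<Sum>i\<in>{1..l}. (a i / r) * X i \<omega>)"
    define V where "V = X (l+1)"
    define T where "T = (\<lambda>\<omega>. \<Sum>i\<in>{l+2..h}. a i * X i \<omega>)"
    have UV: "indep_var borel U borel V"
    proof -
      have "indep_var borel (\<lambda>\<omega>. \<Sum>i\<in>{1..l}. (a i / r) * X i \<omega>) borel (\<lambda>\<omega>. \<Sum>i\<in>{l+1}. 1 * X i \<omega>)"
        by (rule indep_blocks[OF ind]) (use assms in auto)
      thus ?thesis by (simp add: U_def V_def)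
    qed
    have ZT: "indep_var (borel \<Otimes>\<^sub>M borel) (\<lambda>\<omega>. (U \<omega>, V \<omega>)) (borel \<Otimes>\<^sub>M borel) (\<lambda>\<omega>. (T \<omega>, 0))"
    proof -
      have m1: "(\<lambda>f. (\<Sum>i\<in>{1..l}. (a i / r) * f i, f (l+1))) \<in> measurable (PiM {1..l+1} (\<lambda>_. borel)) (borel \<Otimes>\<^sub>M borel)"
        by (intro measurable_Pair borel_measurable_sum) measurable
      have m2: "(\<lambda>f. (\<Sum>i\<in>{l+2..h}. a i * f i, 0::real)) \<in> measurable (PiM {l+2..h} (\<lambda>_. borel)) (borel \<Otimes>\<^sub>M borel)"
        by (intro measurable_Pair borel_measurable_sum) measurable
      have "indep_var (borel \<Otimes>\<^sub>M borel) ((\<lambda>f. (\<Sum>i\<in>{1..l}. (a i / r) * f i, f (l+1))) \<circ> (\<lambda>\<omega>. restrict (\<lambda>i. X i \<omega>) {1..l+1}))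
          (borel \<Otimes>\<^sub>M borel) ((\<lambda>f. (\<Sum>i\<in>{l+2..h}. a i * f i, 0::real)) \<circ> (\<lambda>\<omega>. restrict (\<lambda>i. X i \<omega>) {l+2..h}))"
        by (rule indep_var_compose[OF indep_var_restrict[OF ind] m1 m2]) (use assms in auto)
      moreover have "((\<lambda>f. (\<Sum>i\<in>{1..l}. (a i / r) * f i, f (l+1))) \<circ> (\<lambda>\<omega>. restrict (\<lambda>i. X i \<omega>) {1..l+1})) = (\<lambda>\<omega>. (U \<omega>, V \<omega>))"
        by (auto simp: U_def V_def intro!: sum.cong)
      moreover have "((\<lambda>f. (\<Sum>i\<in>{l+2..h}. a i * f i, 0::real)) \<circ> (\<lambda>\<omega>. restrict (\<lambda>i. X i \<omega>) {l+2..h})) = (\<lambda>\<omega>. (T \<omega>, 0))"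
        by (auto simp: T_def intro!: sum.cong)
      ultimately show ?thesis by simp
    qed
    have dV: "distributed M lborel V (normal_density 0 1)" unfolding V_def using nrm assms by simp
    have dU: "distributed M lborel U (normal_density 0 1)"
    proof -
      define J where "J = {i\<in>{1..l}. a i \<noteq> 0}"
      have fJ: "finite J" and J1: "J \<subseteq> {1..l}" by (auto simp: J_def)
      have Jne: "J \<noteq> {}"
      proof
        assume "J = {}"
        hence "\<And>i. i \<in> {1..l} \<Longrightarrow> a i = 0" by (auto simp: J_def)
        hence "s = 0" by (simp add: s_def)
        thus False using 3 by simp
      qed
      have indY: "indep_vars (\<lambda>i. borel) (\<lambda>i \<omega>. (a i / r) * X i \<omega>) J"
        by (rule indep_vars_subset[OF indep_vars_compose2[OF ind, of "\<lambda>i x. (a i / r) * x" "\<lambda>i. borel"]])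
           (use J1 assms in auto)
      have dY: "distributed M lborel (\<lambda>\<omega>. (a i / r) * X i \<omega>) (normal_density 0 \<bar>a i / r\<bar>)" if "i \<in> J" for i
      proof -
        have "i \<in> {1..k}" "a i / r \<noteq> 0" using that J1 assms r0 by (auto simp: J_def)
        from normal_density_affine[OF nrm[OF this(1)] _ this(2), of 0] show ?thesis by simp
      qed
      have "distributed M lborel (\<lambda>x. \<Sum>i\<in>J. (a i / r) * X i x) (normal_density (\<Sum>i\<in>J. 0) (sqrt (\<Sum>i\<in>J. \<bar>a i / r\<bar>^2)))"
        by (rule sum_indep_normal[OF fJ Jne indY]) (use dY r0 in \<open>auto simp: J_def\<close>)
      moreover have "(\<Sum>i\<in>J. \<bar>a i / r\<bar>^2) = 1"
      proof -
        have "(\<Sum>i\<in>J. \<bar>a i / r\<bar>^2) = (\<Sum>i\<in>{1..l}. (a i)^2 / s)"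
        proof (rule sum.mono_neutral_cong_left)
          have r2: "r^2 = s" using rr by (simp add: power2_eq_square)
          show "\<And>x. x \<in> J \<Longrightarrow> \<bar>a x / r\<bar>\<^sup>2 = (a x)\<^sup>2 / s" by (simp add: power_divide r2)
        qed (auto simp: J_def)
        also have "\<dots> = (\<Sum>i=1..l. (a i)^2) / s" by (simp add: sum_divide_distrib)
        also have "\<dots> = 1" using 3 unfolding s_def by simp
        finally show ?thesis .
      qed
      moreover have "(\<lambda>x. \<Sum>i\<in>J. (a i / r) * X i x) = U"
        unfolding U_def by (intro ext sum.mono_neutral_left) (auto simp: J_def)
      ultimately show ?thesis by simp
    qed
    define gB where "gB = (\<lambda>z::real\<times>real. -d * fst z + c * snd z)"
    define gA where "gA = (\<lambda>z::real\<times>real. c * fst z + d * snd z)"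
    have BA: "indep_var borel (\<lambda>\<omega>. gB (U \<omega>, V \<omega>)) borel (\<lambda>\<omega>. gA (U \<omega>, V \<omega>))"
      using rot_indep[OF UV dU dV cd d0] by (simp add: gA_def gB_def)
    have gm: "gB \<in> borel_measurable (borel \<Otimes>\<^sub>M borel)" "gA \<in> borel_measurable (borel \<Otimes>\<^sub>M borel)"
      unfolding gA_def gB_def by measurable
    have main: "indep_var borel (\<lambda>\<omega>. (-r*\<rho>) * gB (U \<omega>, V \<omega>)) borel (\<lambda>\<omega>. \<rho> * gA (U \<omega>, V \<omega>) + T \<omega>)"
      by (rule three[OF ZT BA gm])
    have rU: "r * U \<omega> = (\<Sum>i=1..l. a i * X i \<omega>)" for \<omega>
      unfolding U_def using r0 by (simp add: sum_distrib_left)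
    have e1: "(\<lambda>\<omega>. (-r*\<rho>) * gB (U \<omega>, V \<omega>)) = (\<lambda>\<omega>. b * (\<Sum>i=1..l. a i * X i \<omega>) - s * X (l + 1) \<omega>)"
    proof
      fix \<omega>
      have "(-r*\<rho>) * gB (U \<omega>, V \<omega>) = r * (\<rho> * d) * U \<omega> - r * (\<rho> * c) * V \<omega>"
        by (simp add: gB_def algebra_simps)
      also have "\<dots> = b * (r * U \<omega>) - s * V \<omega>" by (simp add: \<rho>c \<rho>d rr)
      finally show "(-r*\<rho>) * gB (U \<omega>, V \<omega>) = b * (\<Sum>i=1..l. a i * X i \<omega>) - s * X (l + 1) \<omega>"
        by (simp add: rU V_def)
    qed
    have e2: "(\<lambda>\<omega>. \<rho> * gA (U \<omega>, V \<omega>) + T \<omega>) = (\<lambda>\<omega>. \<Sum>i=1..h. a i * X i \<omega>)"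
    proof
      fix \<omega>
      have "\<rho> * gA (U \<omega>, V \<omega>) + T \<omega> = (\<rho> * c) * U \<omega> + (\<rho> * d) * V \<omega> + T \<omega>"
        by (simp add: gA_def algebra_simps)
      also have "\<dots> = r * U \<omega> + b * V \<omega> + T \<omega>" by (simp add: \<rho>c \<rho>d)
      finally show "\<rho> * gA (U \<omega>, V \<omega>) + T \<omega> = (\<Sum>i=1..h. a i * X i \<omega>)"
        unfolding split[of "\<lambda>i. a i * X i \<omega>"] by (simp add: rU V_def T_def b_def)
    qed
    show ?thesis using main unfolding e1 e2 .
  qed
  thus ?thesis by (simp add: b_def s_def)
qed

end
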